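(* For every $\varepsilon>0$ there is a constant $C_\varepsilon$ such that for all positive integers $n$ and all $D\ge0$, the number of pairs $(m,M)$ that are height profiles of some sum-free subset of $\Lambda(R\cup L)$ meeting every fiber and have discrepancy $D$ is at most $2^{\varepsilon D+C_\varepsilon n}$.
   Context: Sum-free: no $a,b,c$ (not necessarily distinct) with $a+b=c$, coordinatewise addition in $\mathbb{Z}^2$. $\Lambda(X)=\mathbb{Z}^2\cap X$. $R=\{(x,y):0.7n\le x+y\le n,\ |x-y|\le0.8n\}$, $L=\{(x,y):2\lceil0.7n\rceil\le x+y\le1.7n,\ |x-y|\le0.4n\}$, $w=\lfloor0.4n\rfloor$. Fibers $R_i=\{(x,y)\in\Lambda(R):x-y=i\}$ ($|i|\le2w$), $L_k=\{(x,y)\in\Lambda(L):x-y=k\}$ ($|k|\le w$). Height $h(x,y)=\lfloor(x+y-\lceil0.7n\rceil)/2\rfloor$ on $R$ and $\lfloor(x+y-2\lceil0.7n\rceil)/2\rfloor$ on $L$. For sum-free $S\subseteq\Lambda(R\cup L)$ meeting every fiber, its height profile is $(m,M)$ with $m(i)=\min h(S\cap R_i)$, $M(k)=\max h(S\cap L_k)$. Let $\mathcal{T}=\{(-t,2t,t):t\in[w]\}\cup\{(-w-t,2t-1,-w-1+t):t\in[w]\}$. For $s\in\{-1,0,1\}$ and $(i,j,k)\in\mathcal{T}$ set $d_s(i)=M(k+s)-m(j+s)-m(i)$ (taken to be $0$ when some index is outside the domain of $m$ or $M$), $D_s=\sum_{(i,j,k)\in\mathcal{T}}|d_s(i)|$,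 and the discrepancy is $D=\max\{D_{-1},D_0,D_1\}$. *)

theory Defs
  imports Complex_Main
begin

type_synonym pt = "int \<times> int"

definition cR :: "nat \<Rightarrow> int" where
  "cR n = \<lceil>7 * real n / 10\<rceil>"

definition wdt :: "nat \<Rightarrow> int" where
  "wdt n = \<lfloor>4 * real n / 10\<rfloor>"

definition LamR :: "nat \<Rightarrow> pt set" where
  "LamR n = {(x, y). 7 * real n / 10 \<le> real_of_int (x + y) \<and> real_of_int (x + y) \<le> real n
                     \<and> real_of_int \<bar>x - y\<bar> \<le> 8 * real n / 10}"

definition LamL :: "nat \<Rightarrow> pt set" where
  "LamL n = {(x, y). real_of_int (2 * cR n) \<le> real_of_int (x + y) \<and> real_of_int (x + y) \<le> 17 * real n / 10
                     \<and> real_of_int \<bar>x - y\<bar> \<le> 4 * real n / 10}"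

definition Rfib :: "nat \<Rightarrow> int \<Rightarrow> pt set" where
  "Rfib n i = {p \<in> LamR n. fst p - snd p = i}"

definition Lfib :: "nat \<Rightarrow> int \<Rightarrow> pt set" where
  "Lfib n k = {p \<in> LamL n. fst p - snd p = k}"

definition hR :: "nat \<Rightarrow> pt \<Rightarrow> int" where
  "hR n p = (fst p + snd p - cR n) div 2"

definition hL :: "nat \<Rightarrow> pt \<Rightarrow> int" where
  "hL n p = (fst p + snd p - 2 * cR n) div 2"

definition sum_free :: "pt set \<Rightarrow> bool" where
  "sum_free S \<longleftrightarrow> \<not> (\<exists>a\<in>S. \<exists>b\<in>S. \<exists>c\<in>S. fst a + fst b = fst c \<and> snd a + snd b = snd c)"

definition meets_all_fibers :: "nat \<Rightarrow> pt set \<Rightarrow> bool" where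
  "meets_all_fibers n S \<longleftrightarrow>
     (\<forall>i. \<bar>i\<bar> \<le> 2 * wdt n \<longrightarrow> S \<inter> Rfib n i \<noteq> {}) \<and>
     (\<forall>k. \<bar>k\<bar> \<le> wdt n \<longrightarrow> S \<inter> Lfib n k \<noteq> {})"

definition profile :: "nat \<Rightarrow> pt set \<Rightarrow> (int \<Rightarrow> int) \<times> (int \<Rightarrow> int)" where
  "profile n S =
     ((\<lambda>i. if \<bar>i\<bar> \<le> 2 * wdt n then Min (hR n ` (S \<inter> Rfib n i)) else 0),
      (\<lambda>k. if \<bar>k\<bar> \<le> wdt n then Max (hL n ` (S \<inter> Lfib n k)) else 0))"

definition profiles :: "nat \<Rightarrow> ((int \<Rightarrow> int) \<times> (int \<Rightarrow> int)) set" where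
  "profiles n = {profile n S | S. S \<subseteq> LamR n \<union> LamL n \<and> sum_free S \<and> meets_all_fibers n S}"

definition triples :: "nat \<Rightarrow> (int \<times> int \<times> int) set" where
  "triples n = (\<lambda>t. (-t, 2*t, t)) ` {1..wdt n} \<union>
               (\<lambda>t. (- wdt n - t, 2*t - 1, - wdt n - 1 + t)) ` {1..wdt n}"

definition dval :: "nat \<Rightarrow> (int \<Rightarrow> int) \<times> (int \<Rightarrow> int) \<Rightarrow> int \<Rightarrow> int \<times> int \<times> int \<Rightarrow> int" where
  "dval n mM s ijk = (case ijk of (i, j, k) \<Rightarrow>
     (if \<bar>k + s\<bar> \<le> wdt n \<and> \<bar>j + s\<bar> \<le> 2 * wdt n \<and> \<bar>i\<bar> \<le> 2 * wdt n
      then snd mM (k + s) - fst mM (j + s) - fst mM i else 0))"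

definition Dsum :: "nat \<Rightarrow> (int \<Rightarrow> int) \<times> (int \<Rightarrow> int) \<Rightarrow> int \<Rightarrow> int" where
  "Dsum n mM s = (\<Sum>ijk\<in>triples n. \<bar>dval n mM s ijk\<bar>)"

definition discrepancy :: "nat \<Rightarrow> (int \<Rightarrow> int) \<times> (int \<Rightarrow> int) \<Rightarrow> int" where
  "discrepancy n mM = max (Dsum n mM (-1)) (max (Dsum n mM 0) (Dsum n mM 1))"

end

theory Submission imports Defs "HOL-Library.FuncSet" begin

lemma kernel:
  fixes m M :: "int \<Rightarrow> int" and w :: int
  assumes w: "w \<ge> 0"
  and hA0: "\<forall>t. 1 \<le> t \<and> t \<le> w \<longrightarrow> M t = m (2*t) + m (-t)"
  and hA1: "\<forall>t. 1 \<le> t \<and> t \<le> w - 1 \<longrightarrow> M (t+1) = m (2*t+1) + m (-t)"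
  and hAm: "\<forall>t. 1 \<le> t \<and> t \<le> w \<longrightarrow> M (t-1) = m (2*t-1) + m (-t)"
  and hB0: "\<forall>t. 1 \<le> t \<and> t \<le> w \<longrightarrow> M (t-w-1) = m (2*t-1) + m (-w-t)"
  and hB1: "\<forall>t. 1 \<le> t \<and> t \<le> w \<longrightarrow> M (t-w) = m (2*t) + m (-w-t)"
  and hBm: "\<forall>t. 2 \<le> t \<and> t \<le> w \<longrightarrow> M (t-w-2) = m (2*t-2) + m (-w-t)"
  and z: "m 0 = 0" "m 1 = 0" "M 0 = 0" "M 1 = 0"
  and om: "\<forall>i. \<bar>i\<bar> > 2*w \<longrightarrow> m i = 0"
  and oM: "\<forall>k. \<bar>k\<bar> > w \<longrightarrow> M k = 0"
  shows "(\<forall>i. m i = 0) \<and> (\<forall>k. M k = 0)"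
proof -
  have delta: "M (T+1) - M T = M T - M (T-1)" if "1 \<le> T" "T \<le> w - 1" for T
  proof -
    show ?thesis
      using hA0[rule_format, of "T+1"] hAm[rule_format, of "T+1"] hA1[rule_format, of "T"]
        hA0[rule_format, of "T"] hAm[rule_format, of "T"] hB0[rule_format, of "T"] hB1[rule_format, of "T"]
        hB0[rule_format, of "T+1"] hB1[rule_format, of "T+1"] hBm[rule_format, of "T+1"] that
      by (smt (verit))
  qed
  have pos: "M (int t) = 0 \<and> M (int t + 1) = 0" if "int t \<le> w" for t :: nat
    using that
  proof (induction t)
    case 0 then show ?case using z by simp
  next
    case (Suc t)
    have a: "M (int t) = 0" "M (int t + 1) = 0" using Suc by auto
    show ?case
    proof (cases "int t + 2 \<le> w")
      case True
      have "M (int t + 2) = 0" using delta[of "int t + 1"] True a by (simp add: algebra_simps)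
      then show ?thesis using a by (simp add: algebra_simps)
    next
      case False
      then show ?thesis using a oM by (simp add: algebra_simps)
    qed
  qed
  have Mpos: "M k = 0" if "0 \<le> k" for k
  proof (cases "k \<le> w")
    case True then show ?thesis using pos[of "nat k"] that by simp
  next
    case False then show ?thesis using oM that by simp
  qed
  have R1: "M (t-w) = M (t-w-1)" if "1 \<le> t" "t \<le> w" for t
    using hA0[rule_format, of t] hAm[rule_format, of t] hB0[rule_format, of t] hB1[rule_format, of t]
      Mpos[of t] Mpos[of "t-1"] that by simp
  have neg: "M (- int t) = 0" for t :: nat
  proof (induction t)
    case 0 then show ?case using z by simp
  next
    case (Suc t)
    show ?case
    proof (cases "int t + 1 \<le> w")
      case True
      then have "M (w - int t - w) = M (w - int t - w - 1)" using R1[of "w - int t"] by simp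
      then have "M (- int t - 1) = 0" using Suc by simp
      moreover have "- int (Suc t) = - int t - 1" by simp
      ultimately show ?thesis by metis
    next
      case False
      then show ?thesis using oM by simp
    qed
  qed
  have Mz: "\<forall>k. M k = 0"
  proof
    fix k show "M k = 0"
    proof (cases "0 \<le> k")
      case True then show ?thesis using Mpos by simp
    next
      case False then show ?thesis using neg[of "nat (-k)"] by simp
    qed
  qed
  have step: "m (j+1) = m j" if "1 \<le> j" "j \<le> 2*w - 1" for j
  proof (cases "even j")
    case True
    then obtain t where t: "j = 2*t" by blast
    show ?thesis using hA1[rule_format, of t] hA0[rule_format, of t] that Mz t by (smt (verit))
  next
    case False
    then obtain t where t: "j = 2*t + 1" by (meson oddE)
    show ?thesis using hAm[rule_format, of "t+1"] hA0[rule_format, of "t+1"] that Mz t by (smt (verit))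
  qed
  have mp: "m (int t + 1) = 0" for t :: nat
  proof (induction t)
    case 0 then show ?case using z by simp
  next
    case (Suc t)
    show ?case
    proof (cases "int t + 2 \<le> 2*w")
      case True then show ?thesis using step[of "int t + 1"] Suc by (simp add: algebra_simps)
    next
      case False then show ?thesis using om by simp
    qed
  qed
  have mpos: "m i = 0" if "0 \<le> i" for i
    using mp[of "nat (i - 1)"] z that by (cases "i = 0") auto
  have mneg: "m i = 0" if "i < 0" for i
  proof -
    consider "-i \<le> w" | "w < -i \<and> -i \<le> 2*w" | "2*w < -i" using that by linarith
    then show ?thesis
    proof cases
      case 1 then show ?thesis using hA0[rule_format, of "-i"] Mz mpos[of "-2*i"] that by simp
    next
      case 2 then show ?thesis using hB1[rule_format, of "-i-w"] Mz mpos[of "2*(-i-w)"] that by simp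
    next
      case 3 then show ?thesis using om by simp
    qed
  qed
  show ?thesis using Mz mpos mneg by (meson not_le)
qed


lemma cR_ge: "7 * real n / 10 \<le> real_of_int (cR n)"
  unfolding cR_def by (rule le_of_int_ceiling)

lemma cR_le: "cR n \<le> int n"
  unfolding cR_def by (simp add: ceiling_le_iff)

lemma cR_nonneg: "0 \<le> cR n"
  unfolding cR_def by simp

lemma wdt_nonneg: "0 \<le> wdt n"
  unfolding wdt_def by simp

lemma wdt_le: "wdt n \<le> int n"
  unfolding wdt_def by (simp add: floor_le_iff)

lemma hR_bound:
  assumes "p \<in> LamR n" shows "0 \<le> hR n p \<and> hR n p \<le> int n"
proof -
  obtain x y where p: "p = (x, y)" by (cases p)
  have a: "7 * real n / 10 \<le> real_of_int (x + y)" "real_of_int (x + y) \<le> real n"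
    using assms p by (auto simp: LamR_def)
  have "cR n \<le> x + y" using a(1) unfolding cR_def by (simp add: ceiling_le_iff)
  moreover have "x + y \<le> int n" using a(2)
    by (metis of_int_le_iff of_int_of_nat_eq)
  ultimately show ?thesis using p cR_nonneg[of n] unfolding hR_def by auto
qed

lemma hL_bound:
  assumes "p \<in> LamL n" shows "0 \<le> hL n p \<and> hL n p \<le> int n"
proof -
  obtain x y where p: "p = (x, y)" by (cases p)
  have a: "real_of_int (2 * cR n) \<le> real_of_int (x + y)" "real_of_int (x + y) \<le> 17 * real n / 10"
    using assms p by (auto simp: LamL_def)
  have b: "2 * cR n \<le> x + y" using a(1) by (simp only: of_int_le_iff)
  have "real_of_int (x + y - 2 * cR n) \<le> real_of_int (2 * int n)"
    using a cR_ge[of n] by simp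
  then have "x + y - 2 * cR n \<le> 2 * int n" by (simp only: of_int_le_iff)
  then show ?thesis using p b unfolding hL_def by auto
qed

lemma LamR_box: "LamR n \<subseteq> {- int n..int n} \<times> {- int n..int n}"
proof
  fix p assume p: "p \<in> LamR n"
  obtain x y where xy: "p = (x, y)" by (cases p)
  have a: "7 * real n / 10 \<le> real_of_int x + real_of_int y" "real_of_int x + real_of_int y \<le> real n"
     "\<bar>real_of_int x - real_of_int y\<bar> \<le> 8 * real n / 10"
    using p xy by (auto simp: LamR_def)
  have r: "real_of_int x \<le> real n" "- real n \<le> real_of_int x"
       "real_of_int y \<le> real n" "- real n \<le> real_of_int y"
    using a abs_le_D1[OF a(3)] abs_le_D2[OF a(3)] by (linarith+)
  have "x \<le> int n" "- int n \<le> x" "y \<le> int n" "- int n \<le> y"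
    using r by (metis of_int_le_iff of_int_of_nat_eq of_int_minus)+
  then show "p \<in> {- int n..int n} \<times> {- int n..int n}" using xy by auto
qed

lemma LamL_box: "LamL n \<subseteq> {- 2 * int n..2 * int n} \<times> {- 2 * int n..2 * int n}"
proof
  fix p assume p: "p \<in> LamL n"
  obtain x y where xy: "p = (x, y)" by (cases p)
  have a: "real_of_int (2 * cR n) \<le> real_of_int x + real_of_int y" "real_of_int x + real_of_int y \<le> 17 * real n / 10"
     "\<bar>real_of_int x - real_of_int y\<bar> \<le> 4 * real n / 10"
    using p xy by (auto simp: LamL_def)
  have c: "0 \<le> real_of_int (2 * cR n)" using cR_nonneg[of n] by simp
  have r: "real_of_int x \<le> 2 * real n" "- 2 * real n \<le> real_of_int x"
       "real_of_int y \<le> 2 * real n" "- 2 * real n \<le> real_of_int y"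
    using a c abs_le_D1[OF a(3)] abs_le_D2[OF a(3)] by (linarith+)
  have "real_of_int x \<le> real_of_int (2 * int n)" "real_of_int (- 2 * int n) \<le> real_of_int x"
       "real_of_int y \<le> real_of_int (2 * int n)" "real_of_int (- 2 * int n) \<le> real_of_int y"
    using r by simp_all
  then have "x \<le> 2 * int n" "- 2 * int n \<le> x" "y \<le> 2 * int n" "- 2 * int n \<le> y"
    by (simp_all only: of_int_le_iff)
  then show "p \<in> {- 2 * int n..2 * int n} \<times> {- 2 * int n..2 * int n}" using xy by auto
qed

lemma finite_LamR: "finite (LamR n)"
  using LamR_box finite_subset by blast

lemma finite_LamL: "finite (LamL n)"
  using LamL_box finite_subset by blast

lemma prof_props:
  assumes "mM \<in> profiles n"
  shows "\<bar>fst mM i\<bar> \<le> int n" "\<bar>snd mM k\<bar> \<le> int n"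
    "\<bar>i\<bar> > 2 * wdt n \<Longrightarrow> fst mM i = 0" "\<bar>k\<bar> > wdt n \<Longrightarrow> snd mM k = 0"
proof -
  obtain S where S: "mM = profile n S" "sum_free S" "meets_all_fibers n S"
    using assms unfolding profiles_def by blast
  show "\<bar>i\<bar> > 2 * wdt n \<Longrightarrow> fst mM i = 0" "\<bar>k\<bar> > wdt n \<Longrightarrow> snd mM k = 0"
    using S by (auto simp: profile_def)
  show "\<bar>fst mM i\<bar> \<le> int n"
  proof (cases "\<bar>i\<bar> \<le> 2 * wdt n")
    case True
    have ne: "S \<inter> Rfib n i \<noteq> {}" using S(3) True unfolding meets_all_fibers_def by blast
    have fin: "finite (S \<inter> Rfib n i)"
      by (rule finite_subset[OF _ finite_LamR[of n]]) (auto simp: Rfib_def)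
    have "Min (hR n ` (S \<inter> Rfib n i)) \<in> hR n ` (S \<inter> Rfib n i)"
      using ne fin by (intro Min_in) auto
    then obtain p where p: "p \<in> S \<inter> Rfib n i" "Min (hR n ` (S \<inter> Rfib n i)) = hR n p" by auto
    have "p \<in> LamR n" using p by (auto simp: Rfib_def)
    then show ?thesis using hR_bound[of p n] p True S(1) by (simp add: profile_def)
  next
    case False then show ?thesis using S by (simp add: profile_def)
  qed
  show "\<bar>snd mM k\<bar> \<le> int n"
  proof (cases "\<bar>k\<bar> \<le> wdt n")
    case True
    have ne: "S \<inter> Lfib n k \<noteq> {}" using S(3) True unfolding meets_all_fibers_def by blast
    have fin: "finite (S \<inter> Lfib n k)"
      by (rule finite_subset[OF _ finite_LamL[of n]]) (auto simp: Lfib_def)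
    have "Max (hL n ` (S \<inter> Lfib n k)) \<in> hL n ` (S \<inter> Lfib n k)"
      using ne fin by (intro Max_in) auto
    then obtain p where p: "p \<in> S \<inter> Lfib n k" "Max (hL n ` (S \<inter> Lfib n k)) = hL n p" by auto
    have "p \<in> LamL n" using p by (auto simp: Lfib_def)
    then show ?thesis using hL_bound[of p n] p True S(1) by (simp add: profile_def)
  next
    case False then show ?thesis using S by (simp add: profile_def)
  qed
qed

lemma dval_bound:
  assumes "mM \<in> profiles n" shows "\<bar>dval n mM s ijk\<bar> \<le> 3 * int n"
proof -
  obtain i j k where e: "ijk = (i, j, k)" by (cases ijk) auto
  show ?thesis using prof_props(1)[OF assms, of "j+s"] prof_props(1)[OF assms, of i]
      prof_props(2)[OF assms, of "k+s"]
    unfolding e dval_def by auto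
qed

lemma dval_eq:
  assumes "dval n P s (i,j,k) = dval n Q s (i,j,k)" "\<bar>k+s\<bar> \<le> wdt n" "\<bar>j+s\<bar> \<le> 2*wdt n" "\<bar>i\<bar> \<le> 2*wdt n"
  shows "snd P (k+s) - fst P (j+s) - fst P i = snd Q (k+s) - fst Q (j+s) - fst Q i"
  using assms by (simp add: dval_def)

lemma trA: "1 \<le> t \<Longrightarrow> t \<le> wdt n \<Longrightarrow> (-t, 2*t, t) \<in> triples n"
  unfolding triples_def by (rule UnI1, rule image_eqI[where x=t]) auto

lemma trB: "1 \<le> t \<Longrightarrow> t \<le> wdt n \<Longrightarrow> (- wdt n - t, 2*t - 1, - wdt n - 1 + t) \<in> triples n"
  unfolding triples_def by (rule UnI2, rule image_eqI[where x=t]) auto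


definition Iset :: "nat \<Rightarrow> ((int \<times> int \<times> int) \<times> int) set" where
  "Iset n = triples n \<times> {-1, 0, 1}"

definition Phi :: "nat \<Rightarrow> (int \<Rightarrow> int) \<times> (int \<Rightarrow> int) \<Rightarrow> (((int \<times> int \<times> int) \<times> int) \<Rightarrow> int) \<times> int \<times> int \<times> int \<times> int" where
  "Phi n mM = (restrict (\<lambda>q. dval n mM (snd q) (fst q)) (Iset n), (fst mM 0, fst mM 1, snd mM 0, snd mM 1))"

lemma Phi_inj: "inj_on (Phi n) (profiles n)"
proof (rule inj_onI)
  fix P Q assume PQ: "P \<in> profiles n" "Q \<in> profiles n" and eq: "Phi n P = Phi n Q"
  have H: "dval n P s ijk = dval n Q s ijk" if "ijk \<in> triples n" "s \<in> {-1,0,1}" for ijk s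
  proof -
    have "restrict (\<lambda>q. dval n P (snd q) (fst q)) (Iset n) (ijk, s) = restrict (\<lambda>q. dval n Q (snd q) (fst q)) (Iset n) (ijk, s)"
      using eq by (simp add: Phi_def)
    then show ?thesis using that by (simp add: Iset_def)
  qed
  define m where "m = (\<lambda>i. fst P i - fst Q i)"
  define M where "M = (\<lambda>i. snd P i - snd Q i)"
  have m_app: "m i = fst P i - fst Q i" for i unfolding m_def by simp
  have M_app: "M i = snd P i - snd Q i" for i unfolding M_def by simp
  let ?w = "wdt n"
  have hA0: "\<forall>t. 1 \<le> t \<and> t \<le> ?w \<longrightarrow> M t = m (2*t) + m (-t)"
  proof (intro allI impI)
    fix t assume t: "1 \<le> t \<and> t \<le> ?w"
    have e: "snd P (t+0) - fst P (2*t+0) - fst P (-t) = snd Q (t+0) - fst Q (2*t+0) - fst Q (-t)"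
      using t H[OF trA[of t n], of 0] by (intro dval_eq) auto
    show "M t = m (2*t) + m (-t)" unfolding m_app M_app using e by (smt (verit))
  qed
  have hA1: "\<forall>t. 1 \<le> t \<and> t \<le> ?w - 1 \<longrightarrow> M (t+1) = m (2*t+1) + m (-t)"
  proof (intro allI impI)
    fix t assume t: "1 \<le> t \<and> t \<le> ?w - 1"
    have e: "snd P (t+1) - fst P (2*t+1) - fst P (-t) = snd Q (t+1) - fst Q (2*t+1) - fst Q (-t)"
      using t H[OF trA[of t n], of 1] by (intro dval_eq) auto
    show "M (t+1) = m (2*t+1) + m (-t)" unfolding m_app M_app using e by (smt (verit))
  qed
  have hAm: "\<forall>t. 1 \<le> t \<and> t \<le> ?w \<longrightarrow> M (t-1) = m (2*t-1) + m (-t)"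
  proof (intro allI impI)
    fix t assume t: "1 \<le> t \<and> t \<le> ?w"
    have e: "snd P (t+ -1) - fst P (2*t+ -1) - fst P (-t) = snd Q (t+ -1) - fst Q (2*t+ -1) - fst Q (-t)"
      using t H[OF trA[of t n], of "-1"] by (intro dval_eq) auto
    show "M (t-1) = m (2*t-1) + m (-t)" unfolding m_app M_app using e by (smt (verit))
  qed
  have hB0: "\<forall>t. 1 \<le> t \<and> t \<le> ?w \<longrightarrow> M (t-?w-1) = m (2*t-1) + m (-?w-t)"
  proof (intro allI impI)
    fix t assume t: "1 \<le> t \<and> t \<le> ?w"
    have e: "snd P (- ?w - 1 + t + 0) - fst P (2*t - 1 + 0) - fst P (- ?w - t) = snd Q (- ?w - 1 + t + 0) - fst Q (2*t - 1 + 0) - fst Q (- ?w - t)"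
      using t H[OF trB[of t n], of 0] by (intro dval_eq) auto
    show "M (t-?w-1) = m (2*t-1) + m (-?w-t)" unfolding m_app M_app using e by (smt (verit))
  qed
  have hB1: "\<forall>t. 1 \<le> t \<and> t \<le> ?w \<longrightarrow> M (t-?w) = m (2*t) + m (-?w-t)"
  proof (intro allI impI)
    fix t assume t: "1 \<le> t \<and> t \<le> ?w"
    have e: "snd P (- ?w - 1 + t + 1) - fst P (2*t - 1 + 1) - fst P (- ?w - t) = snd Q (- ?w - 1 + t + 1) - fst Q (2*t - 1 + 1) - fst Q (- ?w - t)"
      using t H[OF trB[of t n], of 1] by (intro dval_eq) auto
    show "M (t-?w) = m (2*t) + m (-?w-t)" unfolding m_app M_app using e by (smt (verit))
  qed
  have hBm: "\<forall>t. 2 \<le> t \<and> t \<le> ?w \<longrightarrow> M (t-?w-2) = m (2*t-2) + m (-?w-t)"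
  proof (intro allI impI)
    fix t assume t: "2 \<le> t \<and> t \<le> ?w"
    have e: "snd P (- ?w - 1 + t + -1) - fst P (2*t - 1 + -1) - fst P (- ?w - t) = snd Q (- ?w - 1 + t + -1) - fst Q (2*t - 1 + -1) - fst Q (- ?w - t)"
      using t H[OF trB[of t n], of "-1"] by (intro dval_eq) auto
    show "M (t-?w-2) = m (2*t-2) + m (-?w-t)" unfolding m_app M_app using e by (smt (verit))
  qed
  have z: "m 0 = 0" "m 1 = 0" "M 0 = 0" "M 1 = 0" using eq by (simp_all add: Phi_def m_app M_app)
  have om: "\<forall>i. \<bar>i\<bar> > 2*?w \<longrightarrow> m i = 0" using prof_props(3)[OF PQ(1)] prof_props(3)[OF PQ(2)] by (simp add: m_app)
  have oM: "\<forall>k. \<bar>k\<bar> > ?w \<longrightarrow> M k = 0" using prof_props(4)[OF PQ(1)] prof_props(4)[OF PQ(2)] by (simp add: M_app)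
  have K: "(\<forall>i. m i = 0) \<and> (\<forall>k. M k = 0)"
    by (rule kernel[OF wdt_nonneg hA0 hA1 hAm hB0 hB1 hBm z om oM])
  then have "fst P = fst Q" "snd P = snd Q" by (auto simp: m_app M_app)
  then show "P = Q" by (rule prod_eqI)
qed


lemma geom_int:
  fixes r :: real assumes r: "0 < r" "r < 1"
  shows "(\<Sum>z\<in>{- int N..int N}. r ^ nat \<bar>z\<bar>) = (1 + r - 2 * r ^ (N+1)) / (1 - r)"
proof (induction N)
  case 0 then show ?case using r by (simp add: field_simps)
next
  case (Suc N)
  have set: "{- int (Suc N)..int (Suc N)} = insert (int N + 1) (insert (- int N - 1) {- int N..int N})"
    by auto
  have "(\<Sum>z\<in>{- int (Suc N)..int (Suc N)}. r ^ nat \<bar>z\<bar>) =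
        r ^ nat \<bar>int N + 1\<bar> + (r ^ nat \<bar>- int N - 1\<bar> + (\<Sum>z\<in>{- int N..int N}. r ^ nat \<bar>z\<bar>))"
    unfolding set by (subst sum.insert; simp)+
  also have "nat \<bar>int N + 1\<bar> = Suc N" by simp
  also have "nat \<bar>- int N - 1\<bar> = Suc N" by simp
  finally show ?case using Suc r by (simp add: field_simps)
qed

lemma geom_bound:
  fixes r :: real assumes r: "0 < r" "r < 1"
  shows "(\<Sum>z\<in>{- int N..int N}. r ^ nat \<bar>z\<bar>) \<le> (1 + r) / (1 - r)"
  using geom_int[OF r, of N] r by (simp add: divide_right_mono)

lemma card_triples: "card (triples n) \<le> 2 * n"
proof -
  have "card (triples n) \<le> card ((\<lambda>t. (-t, 2*t, t)) ` {1..wdt n}) + card ((\<lambda>t. (- wdt n - t, 2*t - 1, - wdt n - 1 + t)) ` {1..wdt n})"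
    unfolding triples_def by (rule card_Un_le)
  also have "\<dots> \<le> card {1..wdt n} + card {1..wdt n}"
    by (intro add_mono card_image_le) auto
  also have "\<dots> \<le> 2 * n" using wdt_le[of n] by simp
  finally show ?thesis .
qed

lemma card_Iset: "card (Iset n) \<le> 6 * n"
proof -
  have "card (Iset n) = card (triples n) * 3"
    unfolding Iset_def by (simp add: card_cartesian_product)
  then show ?thesis using card_triples[of n] by simp
qed

lemma finite_triples: "finite (triples n)"
  unfolding triples_def by simp

lemma pow_small: "real (2 * n + 1) \<le> 2 ^ (2 * n)"
proof (induction n)
  case 0 then show ?case by simp
next
  case (Suc n)
  have "real (2 * Suc n + 1) \<le> 4 * real (2 * n + 1)" by simp
  also have "\<dots> \<le> 4 * 2 ^ (2 * n)" using Suc by simp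
  also have "\<dots> = 2 ^ (2 * Suc n)" by (simp add: power_add)
  finally show ?case .
qed

lemma Dsum_split:
  "(\<Sum>q\<in>Iset n. \<bar>dval n mM (snd q) (fst q)\<bar>) = Dsum n mM (-1) + Dsum n mM 0 + Dsum n mM 1"
proof -
  have "(\<Sum>q\<in>Iset n. \<bar>dval n mM (snd q) (fst q)\<bar>) = (\<Sum>ijk\<in>triples n. \<Sum>s\<in>{-1,0,1}. \<bar>dval n mM s ijk\<bar>)"
    unfolding Iset_def by (subst sum.cartesian_product) (simp add: case_prod_beta)
  also have "\<dots> = (\<Sum>s\<in>{-1,0,1}. \<Sum>ijk\<in>triples n. \<bar>dval n mM s ijk\<bar>)"
    by (rule sum.swap)
  also have "\<dots> = Dsum n mM (-1) + Dsum n mM 0 + Dsum n mM 1"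
    by (simp add: Dsum_def)
  finally show ?thesis .
qed

theorem mainTheorem19:
  shows "\<forall>\<epsilon>::real. \<epsilon> > 0 \<longrightarrow> (\<exists>C::real. \<forall>n::nat. n > 0 \<longrightarrow> (\<forall>D::real. D \<ge> 0 \<longrightarrow>
     real (card {mM \<in> profiles n. real_of_int (discrepancy n mM) = D}) \<le> 2 powr (\<epsilon> * D + C * real n)))"
proof (intro allI impI)
  fix \<epsilon> :: real assume eps: "\<epsilon> > 0"
  define r :: real where "r = 2 powr (- (\<epsilon> / 3))"
  have r0: "0 < r" unfolding r_def by simp
  have r1: "r < 1" unfolding r_def using eps by (simp add: powr_less_one)
  define K where "K = (1 + r) / (1 - r)"
  have K1: "1 \<le> K" unfolding K_def using r0 r1 by (simp add: field_simps)
  define C where "C = 6 * log 2 K + 8"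
  show "\<exists>C::real. \<forall>n::nat. n > 0 \<longrightarrow> (\<forall>D::real. D \<ge> 0 \<longrightarrow>
     real (card {mM \<in> profiles n. real_of_int (discrepancy n mM) = D}) \<le> 2 powr (\<epsilon> * D + C * real n))"
  proof (intro exI[of _ C] allI impI)
    fix n :: nat and D :: real assume n: "n > 0" and D: "D \<ge> 0"
    define P where "P = {mM \<in> profiles n. real_of_int (discrepancy n mM) = D}"
    define Bx where "Bx = {- int n..int n}"
    define F where "F = {- int (3 * n)..int (3 * n)}"
    define T where "T = PiE (Iset n) (\<lambda>_. F) \<times> (Bx \<times> Bx \<times> Bx \<times> Bx)"
    define W where "W = (\<lambda>gy :: (((int \<times> int \<times> int) \<times> int) \<Rightarrow> int) \<times> int \<times> int \<times> int \<times> int.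
                          \<Prod>q\<in>Iset n. r ^ nat \<bar>fst gy q\<bar>)"
    define c where "c = 2 powr (\<epsilon> * D)"
    have finI: "finite (Iset n)" unfolding Iset_def using finite_triples by simp
    have Wnn: "0 \<le> W gy" for gy unfolding W_def using r0 by (simp add: prod_nonneg)
    have c0: "0 \<le> c" unfolding c_def by simp
    have a: "1 \<le> c * W (Phi n mM)" if mM: "mM \<in> P" for mM
    proof -
      have prof: "mM \<in> profiles n" and disc: "real_of_int (discrepancy n mM) = D" using mM by (auto simp: P_def)
      define S where "S = (\<Sum>q\<in>Iset n. nat \<bar>dval n mM (snd q) (fst q)\<bar>)"
      have "W (Phi n mM) = (\<Prod>q\<in>Iset n. r ^ nat \<bar>dval n mM (snd q) (fst q)\<bar>)"
        unfolding W_def Phi_def by (intro prod.cong) auto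
      also have "\<dots> = r ^ S" unfolding S_def by (simp add: power_sum)
      finally have W1: "W (Phi n mM) = r ^ S" .
      have "int S = (\<Sum>q\<in>Iset n. \<bar>dval n mM (snd q) (fst q)\<bar>)"
        unfolding S_def by (simp add: of_nat_sum)
      also have "\<dots> = Dsum n mM (-1) + Dsum n mM 0 + Dsum n mM 1" by (rule Dsum_split)
      also have "\<dots> \<le> 3 * discrepancy n mM" unfolding discrepancy_def by simp
      finally have "int S \<le> 3 * discrepancy n mM" .
      then have "real_of_int (int S) \<le> real_of_int (3 * discrepancy n mM)" by (simp only: of_int_le_iff)
      then have SD: "real S \<le> 3 * D" using disc by simp
      have "r ^ S = r powr real S" using r0 by (simp add: powr_realpow)
      also have "\<dots> \<ge> r powr (3 * D)" using SD r0 r1 by (intro powr_mono') auto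
      finally have rS: "r powr (3 * D) \<le> r ^ S" .
      have "r powr (3 * D) = 2 powr (- (\<epsilon> / 3) * (3 * D))" unfolding r_def by (simp add: powr_powr)
      also have "\<dots> = 2 powr (- (\<epsilon> * D))" by simp
      finally have "c * r powr (3 * D) = 1" unfolding c_def by (simp add: powr_minus)
      then show ?thesis using rS c0 W1 by (metis mult_left_mono)
    qed
    have inj: "inj_on (Phi n) P" using Phi_inj[of n] unfolding P_def by (rule inj_on_subset) auto
    have sub: "Phi n ` P \<subseteq> T"
    proof
      fix y assume "y \<in> Phi n ` P"
      then obtain mM where mM: "mM \<in> P" "y = Phi n mM" by auto
      have prof: "mM \<in> profiles n" using mM by (auto simp: P_def)
      have "restrict (\<lambda>q. dval n mM (snd q) (fst q)) (Iset n) \<in> PiE (Iset n) (\<lambda>_. F)"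
        unfolding restrict_PiE_iff F_def
      proof (intro ballI)
        fix q :: "(int \<times> int \<times> int) \<times> int"
        have "\<bar>dval n mM (snd q) (fst q)\<bar> \<le> 3 * int n" by (rule dval_bound[OF prof])
        then show "dval n mM (snd q) (fst q) \<in> {- int (3 * n)..int (3 * n)}" by (simp add: abs_le_iff)
      qed
      moreover have "(fst mM 0, fst mM 1, snd mM 0, snd mM 1) \<in> Bx \<times> Bx \<times> Bx \<times> Bx"
        unfolding Bx_def using prof_props(1)[OF prof, of 0] prof_props(1)[OF prof, of 1]
          prof_props(2)[OF prof, of 0] prof_props(2)[OF prof, of 1] by (simp add: abs_le_iff)
      ultimately show "y \<in> T" unfolding T_def mM(2) Phi_def by simp
    qed
    have finT: "finite T" unfolding T_def F_def Bx_def using finI by (simp add: finite_PiE)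
    have "real (card P) = (\<Sum>mM\<in>P. 1)" by simp
    also have "\<dots> \<le> (\<Sum>mM\<in>P. c * W (Phi n mM))" by (rule sum_mono) (rule a)
    also have "\<dots> = (\<Sum>y\<in>Phi n ` P. c * W y)" using inj by (simp add: sum.reindex)
    also have "\<dots> \<le> (\<Sum>y\<in>T. c * W y)" using sub finT c0 Wnn by (intro sum_mono2) auto
    also have "\<dots> = c * (\<Sum>y\<in>T. W y)" by (simp add: sum_distrib_left)
    also have "(\<Sum>y\<in>T. W y) = (\<Sum>g\<in>PiE (Iset n) (\<lambda>_. F). \<Sum>y\<in>Bx \<times> Bx \<times> Bx \<times> Bx. W (g, y))"
      unfolding T_def by (simp add: sum.cartesian_product)
    also have "\<dots> = real (card (Bx \<times> Bx \<times> Bx \<times> Bx)) * (\<Sum>g\<in>PiE (Iset n) (\<lambda>_. F). \<Prod>q\<in>Iset n. r ^ nat \<bar>g q\<bar>)"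
      unfolding W_def by (simp add: sum_distrib_left)
    also have "(\<Sum>g\<in>PiE (Iset n) (\<lambda>_. F). \<Prod>q\<in>Iset n. r ^ nat \<bar>g q\<bar>) = (\<Prod>q\<in>Iset n. \<Sum>z\<in>F. r ^ nat \<bar>z\<bar>)"
      using finI by (subst prod_sum_PiE) (auto simp: F_def)
    also have "\<dots> = (\<Sum>z\<in>F. r ^ nat \<bar>z\<bar>) ^ card (Iset n)" by simp
    also have "\<dots> \<le> K ^ card (Iset n)"
      unfolding F_def K_def using geom_bound[OF r0 r1, of "3 * n"] r0
      by (intro power_mono) (auto intro: sum_nonneg)
    also have "\<dots> \<le> K ^ (6 * n)" using K1 card_Iset[of n] by (rule power_increasing[rotated])
    also have "real (card (Bx \<times> Bx \<times> Bx \<times> Bx)) = real (2 * n + 1) ^ 4"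
      unfolding Bx_def by (simp add: card_cartesian_product nat_int_add power4_eq_xxxx algebra_simps)
    finally have bound: "real (card P) \<le> c * (real (2 * n + 1) ^ 4 * K ^ (6 * n))"
      using c0 by (simp add: mult_left_mono)
    have b1: "real (2 * n + 1) ^ 4 \<le> 2 powr (8 * real n)"
    proof -
      have "real (2 * n + 1) ^ 4 \<le> (2 ^ (2 * n)) ^ 4" using pow_small[of n] by (intro power_mono) auto
      also have "\<dots> = 2 ^ (8 * n)" by (simp add: power_mult[symmetric] mult.commute)
      also have "\<dots> = 2 powr (8 * real n)" by (simp add: powr_realpow[symmetric])
      finally show ?thesis .
    qed
    have b2: "K ^ (6 * n) = 2 powr (6 * log 2 K * real n)"
    proof -
      have "K ^ (6 * n) = K powr real (6 * n)" using K1 by (subst powr_realpow) auto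
      also have "\<dots> = (2 powr log 2 K) powr real (6 * n)" using K1 by simp
      also have "\<dots> = 2 powr (6 * log 2 K * real n)" by (simp add: powr_powr mult.commute mult.left_commute)
      finally show ?thesis .
    qed
    have "real (card P) \<le> c * (2 powr (8 * real n) * 2 powr (6 * log 2 K * real n))"
      using bound b1 b2 c0 by (smt (verit) mult_left_mono mult_right_mono zero_le_power K1)
    also have "\<dots> = 2 powr (\<epsilon> * D + C * real n)"
      unfolding c_def C_def by (simp add: powr_add[symmetric] algebra_simps)
    finally show "real (card {mM \<in> profiles n. real_of_int (discrepancy n mM) = D}) \<le> 2 powr (\<epsilon> * D + C * real n)"
      unfolding P_def .
  qed
qed

end
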